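(* Let $\mathbf A\in\mathbb C^{m\times n}$, $\mathbf B\in\mathbb C^{s\times n}$, let $\mathbf X_{LS}=(x_{ij})\in\mathbb C^{s\times m}$ be the minimum norm least squares solution of $\mathbf X\mathbf A=\mathbf B$, and let $\check{\mathbf B}=\mathbf B\mathbf A^{*}$ with $i$-th row $\check{\mathbf b}_{i.}$. (i) If $\operatorname{rank}\mathbf A=r\le n<m$, then for all $i=1,\dots,s$, $j=1,\dots,m$, \[x_{ij}=\frac{\sum_{\alpha\in I_{r,m}\{j\}}\left|\left((\mathbf A\mathbf A^{*})_{j.}(\check{\mathbf b}_{i.})\right)^{\alpha}_{\alpha}\right|}{\sum_{\alpha\in I_{r,m}}\left|(\mathbf A\mathbf A^{*})^{\alpha}_{\alpha}\right|}.\] (ii) If $\operatorname{rank}\mathbf A=m$, then for all $i=1,\dots,s$, $j=1,\dots,m$, $x_{ij}=\dfrac{\det\left((\mathbf A\mathbf A^{*})_{j.}(\check{\mathbf b}_{i.})\right)}{\det(\mathbf A\mathbf A^{*})}$.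
   Context: $\mathbf X_{LS}$ is the matrix of minimal Frobenius norm among all $\mathbf X\in\mathbb C^{s\times m}$ minimizing the Frobenius norm $\|\mathbf X\mathbf A-\mathbf B\|$. $\mathbf M_{j.}(\mathbf c)$ denotes $\mathbf M$ with its $j$-th row replaced by the row vector $\mathbf c$. $I_{r,m}$ is the set of strictly increasing sequences of $r$ elements of $\{1,\dots,m\}$, $I_{r,m}\{j\}=\{\alpha\in I_{r,m}:j\in\alpha\}$, $\mathbf M^{\alpha}_{\alpha}$ is the principal submatrix indexed by $\alpha$, $|\cdot|$ is the determinant. *)

theory Defs
  imports "Jordan_Normal_Form.Schur_Decomposition" "Jordan_Normal_Form.DL_Rank"
          "Jordan_Normal_Form.DL_Submatrix"
begin

definition frob_norm :: "complex mat \<Rightarrow> real" where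
  "frob_norm M = sqrt (\<Sum>i<dim_row M. \<Sum>k<dim_col M. (cmod (M $$ (i,k)))^2)"

definition is_ls_solution :: "complex mat \<Rightarrow> complex mat \<Rightarrow> complex mat \<Rightarrow> bool" where
  "is_ls_solution A B X \<longleftrightarrow> X \<in> carrier_mat (dim_row B) (dim_row A) \<and>
     (\<forall>Y \<in> carrier_mat (dim_row B) (dim_row A). frob_norm (X * A - B) \<le> frob_norm (Y * A - B))"

definition is_min_norm_ls_solution :: "complex mat \<Rightarrow> complex mat \<Rightarrow> complex mat \<Rightarrow> bool" where
  "is_min_norm_ls_solution A B X \<longleftrightarrow> is_ls_solution A B X \<and>
     (\<forall>Y. is_ls_solution A B Y \<longrightarrow> frob_norm X \<le> frob_norm Y)"

definition replace_row :: "'a mat \<Rightarrow> nat \<Rightarrow> 'a vec \<Rightarrow> 'a mat" where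
  "replace_row M j c = mat (dim_row M) (dim_col M) (\<lambda>(i,k). if i = j then c $ k else M $$ (i,k))"

text \<open>I_{r,m}: r-element subsets of {0..<m} (strictly increasing index sequences).\<close>
definition index_sets :: "nat \<Rightarrow> nat \<Rightarrow> nat set set" where
  "index_sets r m = {\<alpha>. \<alpha> \<subseteq> {..<m} \<and> card \<alpha> = r}"

definition principal_submatrix :: "'a mat \<Rightarrow> nat set \<Rightarrow> 'a mat" where
  "principal_submatrix M \<alpha> = submatrix M \<alpha> \<alpha>"

end

theory Submission
  imports Defs "Jordan_Normal_Form.DL_Rank_Submatrix"
begin



definition ipick :: "nat set \<Rightarrow> nat \<Rightarrow> nat" where
  "ipick B x = card {a\<in>B. a < x}"

lemma pick_bij:
  assumes "finite B"
  shows "bij_betw (pick B) {..<card B} B"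
    and "\<And>a. a < card B \<Longrightarrow> ipick B (pick B a) = a"
    and "\<And>x. x \<in> B \<Longrightarrow> pick B (ipick B x) = x"
    and "\<And>x. x \<in> B \<Longrightarrow> ipick B x < card B"
proof -
  show ip: "ipick B (pick B a) = a" if "a < card B" for a
    using card_pick_le[OF that] unfolding ipick_def by simp
  show pi: "pick B (ipick B x) = x" if "x \<in> B" for x
    using pick_card_in_set[OF that] unfolding ipick_def by simp
  show lt: "ipick B x < card B" if "x \<in> B" for x
  proof -
    have "{a\<in>B. a < x} \<subset> B" using that by auto
    thus ?thesis unfolding ipick_def using assms by (simp add: psubset_card_mono)
  qed
  show "bij_betw (pick B) {..<card B} B"
  proof (rule bij_betw_byWitness[where f' = "ipick B"])
    show "\<forall>a\<in>{..<card B}. ipick B (pick B a) = a" using ip by auto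
    show "\<forall>a'\<in>B. pick B (ipick B a') = a'" using pi by auto
    show "pick B ` {..<card B} \<subseteq> B" using pick_in_set_le by auto
    show "ipick B ` B \<subseteq> {..<card B}" using lt by auto
  qed
qed

lemma det_submatrix_perm:
  fixes M :: "'a::comm_ring_1 mat"
  assumes B: "B \<subseteq> {..<dim_row M}" "B \<subseteq> {..<dim_col M}"
  shows "det (submatrix M B B) = (\<Sum>p\<in>{p. p permutes B}. signof p * (\<Prod>i\<in>B. M $$ (i, p i)))"
proof -
  have fin: "finite B" using B finite_subset by blast
  define k where "k = card B"
  have c1: "{i. i < dim_row M \<and> i \<in> B} = B" "{i. i < dim_col M \<and> i \<in> B} = B" using B by auto
  have sub: "submatrix M B B = mat k k (\<lambda>(a,b). M $$ (pick B a, pick B b))"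
    unfolding submatrix_def c1 k_def by simp
  have car: "submatrix M B B \<in> carrier_mat k k" unfolding sub by simp
  note pk = pick_bij[OF fin, folded k_def]
  have "det (submatrix M B B) = (\<Sum>q\<in>{q. q permutes {0..<k}}. signof q * (\<Prod>a=0..<k. M $$ (pick B a, pick B (q a))))"
    unfolding sub det_def'[OF car[unfolded sub]] by (intro sum.cong refl arg_cong2[where f="(*)"] prod.cong) 
      (auto simp: permutes_in_image)
  also have "\<dots> = (\<Sum>p\<in>{p. p permutes B}. signof p * (\<Prod>i\<in>B. M $$ (i, p i)))"
  proof (rule sum.reindex_bij_witness[where i = "\<lambda>p. map_permutation B (ipick B) p"
        and j = "\<lambda>q. map_permutation {0..<k} (pick B) q"])
    have bp: "bij_betw (pick B) {0..<k} B" using pk(1) by (simp add: atLeast0LessThan)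
    have bi: "bij_betw (ipick B) B {0..<k}"
      by (rule bij_betw_byWitness[where f' = "pick B"]) (use pk(2,3,4) pick_in_set_le in \<open>auto simp: k_def\<close>)
    have ip: "inj_on (pick B) {0..<k}" using bp by (rule bij_betw_imp_inj_on)
    have ii: "inj_on (ipick B) B" using bi by (rule bij_betw_imp_inj_on)
    {
      fix q assume q: "q \<in> {q. q permutes {0..<k}}"
      hence q': "q permutes {0..<k}" by simp
      show "map_permutation {0..<k} (pick B) q \<in> {p. p permutes B}"
        using map_permutation_permutes[OF bp q'] by simp
      have "map_permutation B (ipick B) (map_permutation {0..<k} (pick B) q)
          = map_permutation {0..<k} (ipick B \<circ> pick B) q"
        by (rule map_permutation_compose[OF bp ii])
      also have "\<dots> = map_permutation {0..<k} id q"
        by (rule map_permutation_cong[OF _ q' refl]) (use pk(2) in \<open>auto simp: inj_on_def\<close>)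
      also have "\<dots> = q" using q' by simp
      finally show "map_permutation B (ipick B) (map_permutation {0..<k} (pick B) q) = q" .
      have val: "map_permutation {0..<k} (pick B) q (pick B a) = pick B (q a)" if "a \<in> {0..<k}" for a
        using that ip by (simp add: map_permutation_def restrict_id_def inv_into_f_f)
      have "sign (map_permutation {0..<k} (pick B) q) = sign q"
        by (rule sign_map_permutation[OF ip q']) simp
      moreover have "(\<Prod>a = 0..<k. M $$ (pick B a, pick B (q a))) = 
          (\<Prod>i\<in>B. M $$ (i, map_permutation {0..<k} (pick B) q i))"
      proof (rule prod.reindex_bij_witness[where j = "pick B" and i = "ipick B"])
        fix a assume a: "a \<in> {0..<k}"
        thus "ipick B (pick B a) = a" "pick B a \<in> B" using pk(2) pick_in_set_le[of a B] by (auto simp: k_def)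
        show "M $$ (pick B a, map_permutation {0..<k} (pick B) q (pick B a)) =
           M $$ (pick B a, pick B (q a))" using val[OF a] by simp
      next
        fix x assume "x \<in> B"
        thus "pick B (ipick B x) = x" "ipick B x \<in> {0..<k}" using pk(3,4) by (auto simp: k_def)
      qed
      ultimately show "signof (map_permutation {0..<k} (pick B) q) *
        (\<Prod>i\<in>B. M $$ (i, map_permutation {0..<k} (pick B) q i)) =
        signof q * (\<Prod>a = 0..<k. M $$ (pick B a, pick B (q a)))" by simp
    }
    {
      fix p assume p: "p \<in> {p. p permutes B}"
      hence p': "p permutes B" by simp
      show "map_permutation B (ipick B) p \<in> {q. q permutes {0..<k}}"
        using map_permutation_permutes[OF bi p'] by simp
      have "map_permutation {0..<k} (pick B) (map_permutation B (ipick B) p)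
          = map_permutation B (pick B \<circ> ipick B) p"
        by (rule map_permutation_compose[OF bi ip])
      also have "\<dots> = map_permutation B id p"
        by (rule map_permutation_cong[OF _ p' refl]) (use pk(3) in \<open>auto simp: inj_on_def\<close>)
      also have "\<dots> = p" using p' by simp
      finally show "map_permutation {0..<k} (pick B) (map_permutation B (ipick B) p) = p" .
    }
  qed
  finally show ?thesis .
qed

lemma prod_if_fix:
  fixes c :: "nat \<Rightarrow> 'a::comm_ring_1"
  assumes "finite A"
  shows "(\<Prod>i\<in>A. if i = p i then c i else 0) = (if \<forall>i\<in>A. p i = i then \<Prod>i\<in>A. c i else 0)"
proof (cases "\<forall>i\<in>A. p i = i")
  case True then show ?thesis by (auto intro!: prod.cong)
next
  case False
  then obtain i where i: "i \<in> A" "p i \<noteq> i" by auto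
  have "\<exists>a\<in>A. (if a = p a then c a else 0) = 0" using i by (intro bexI[of _ i]) auto
  then have "(\<Prod>i\<in>A. if i = p i then c i else 0) = 0" by (rule prod_zero[OF assms])
  then show ?thesis by (simp only: if_not_P[OF False])
qed

lemma perms_fix_eq:
  assumes "S \<subseteq> U"
  shows "{p. p permutes U \<and> (\<forall>i\<in>U - S. p i = i)} = {p. p permutes S}"
proof -
  have "p permutes S" if "p permutes U" "\<forall>i\<in>U - S. p i = i" for p
    using that unfolding permutes_def by blast
  moreover have "p permutes U \<and> (\<forall>i\<in>U - S. p i = i)" if "p permutes S" for p
    using that permutes_subset[OF that assms] permutes_not_in[OF that] by auto
  ultimately show ?thesis by blast
qed

lemma det_plus_diag:
  fixes M :: "'a::comm_ring_1 mat"
  assumes M: "M \<in> carrier_mat m m"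
  shows "det (M + mat m m (\<lambda>(i,k). if i = k then c i else 0)) =
    (\<Sum>S\<in>Pow {..<m}. (\<Prod>i\<in>{..<m} - S. c i) * det (submatrix M S S))"
proof -
  define U where "U = {..<m}"
  have U: "{0..<m} = U" unfolding U_def by auto
  define D where "D = M + mat m m (\<lambda>(i,k). if i = k then c i else 0)"
  have D: "D \<in> carrier_mat m m" using M unfolding D_def by auto
  have Dij: "D $$ (i,j) = M $$ (i,j) + (if i = j then c i else 0)" if "i < m" "j < m" for i j
    using that M unfolding D_def by auto
  have "det D = (\<Sum>p\<in>{p. p permutes U}. signof p * (\<Prod>i\<in>U. M $$ (i, p i) + (if i = p i then c i else 0)))"
    unfolding det_def'[OF D] U
  proof (intro sum.cong refl arg_cong2[where f="(*)"] prod.cong)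
    fix p i assume p: "p \<in> {p. p permutes U}" and i: "i \<in> U"
    have "p i \<in> U" using p i permutes_in_image[of p U i] by simp
    then show "D $$ (i, p i) = M $$ (i, p i) + (if i = p i then c i else 0)"
      using i by (intro Dij) (auto simp: U_def)
  qed
  also have "\<dots> = (\<Sum>p\<in>{p. p permutes U}. (\<Sum>S\<in>Pow U. signof p * ((\<Prod>i\<in>S. M $$ (i, p i)) * (\<Prod>i\<in>U - S. if i = p i then c i else 0))))"
    by (simp add: prod_add U_def sum_distrib_left)
  also have "\<dots> = (\<Sum>S\<in>Pow U. \<Sum>p\<in>{p. p permutes U}. signof p * ((\<Prod>i\<in>S. M $$ (i, p i)) * (\<Prod>i\<in>U - S. if i = p i then c i else 0)))"
    by (rule sum.swap)
  also have "\<dots> = (\<Sum>S\<in>Pow U. (\<Prod>i\<in>U - S. c i) * det (submatrix M S S))"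
  proof (rule sum.cong[OF refl])
    fix S assume S: "S \<in> Pow U"
    have "(\<Sum>p\<in>{p. p permutes U}. signof p * ((\<Prod>i\<in>S. M $$ (i, p i)) * (\<Prod>i\<in>U - S. if i = p i then c i else 0)))
      = (\<Sum>p\<in>{p. p permutes U}. if (\<forall>i\<in>U - S. p i = i) then (\<Prod>i\<in>U - S. c i) * (signof p * (\<Prod>i\<in>S. M $$ (i, p i))) else 0)"
      by (intro sum.cong refl) (auto simp: prod_if_fix U_def)
    also have "\<dots> = (\<Sum>p\<in>{p. p permutes U \<and> (\<forall>i\<in>U - S. p i = i)}. (\<Prod>i\<in>U - S. c i) * (signof p * (\<Prod>i\<in>S. M $$ (i, p i))))"
      by (subst sum.inter_filter[symmetric]) (auto simp: U_def finite_permutations intro: arg_cong[where f="\<lambda>A. sum _ A"])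
    also have "\<dots> = (\<Prod>i\<in>U - S. c i) * (\<Sum>p\<in>{p. p permutes S}. signof p * (\<Prod>i\<in>S. M $$ (i, p i)))"
      using S by (simp add: perms_fix_eq sum_distrib_left)
    also have "\<dots> = (\<Prod>i\<in>U - S. c i) * det (submatrix M S S)"
      using S M by (subst det_submatrix_perm) (auto simp: U_def)
    finally show "(\<Sum>p\<in>{p. p permutes U}. signof p * ((\<Prod>i\<in>S. M $$ (i, p i)) * (\<Prod>i\<in>U - S. if i = p i then c i else 0)))
      = (\<Prod>i\<in>U - S. c i) * det (submatrix M S S)" .
  qed
  finally show ?thesis unfolding D_def U_def .
qed



lemma sylvester_poly:
  fixes C :: "'a::idom mat" and D :: "'a mat"
  assumes C: "C \<in> carrier_mat p q" and D: "D \<in> carrier_mat q p"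
  defines "Xp \<equiv> [:0,1:] :: 'a poly"
  defines "Cp \<equiv> map_mat (\<lambda>a. [:a:]) C" and "Dp \<equiv> map_mat (\<lambda>a. [:a:]) D"
  shows "Xp^q * det (Xp \<cdot>\<^sub>m 1\<^sub>m p + Cp * Dp) = Xp^p * det (Xp \<cdot>\<^sub>m 1\<^sub>m q + Dp * Cp)"
proof -
  have Cp: "Cp \<in> carrier_mat p q" and Dp: "Dp \<in> carrier_mat q p" using C D unfolding Cp_def Dp_def by auto
  define U where "U = four_block_mat (Xp \<cdot>\<^sub>m 1\<^sub>m p) (- Cp) Dp (1\<^sub>m q)"
  define V1 where "V1 = four_block_mat (1\<^sub>m p) (0\<^sub>m p q) (- Dp) (1\<^sub>m q)"
  define V2 where "V2 = four_block_mat (1\<^sub>m p) (0\<^sub>m p q) (- Dp) (Xp \<cdot>\<^sub>m 1\<^sub>m q)"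
  have U: "U \<in> carrier_mat (p+q) (p+q)" unfolding U_def using Cp Dp by auto
  have V1: "V1 \<in> carrier_mat (p+q) (p+q)" unfolding V1_def using Cp Dp by auto
  have V2: "V2 \<in> carrier_mat (p+q) (p+q)" unfolding V2_def using Cp Dp by auto
  have "U * V1 = four_block_mat (Xp \<cdot>\<^sub>m 1\<^sub>m p * 1\<^sub>m p + - Cp * - Dp) (Xp \<cdot>\<^sub>m 1\<^sub>m p * 0\<^sub>m p q + - Cp * 1\<^sub>m q)
      (Dp * 1\<^sub>m p + 1\<^sub>m q * - Dp) (Dp * 0\<^sub>m p q + 1\<^sub>m q * 1\<^sub>m q)"
    unfolding U_def V1_def by (rule mult_four_block_mat) (use Cp Dp in auto)
  also have "\<dots> = four_block_mat (Xp \<cdot>\<^sub>m 1\<^sub>m p + Cp * Dp) (- Cp) (0\<^sub>m q p) (1\<^sub>m q)"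
  proof -
    have "Xp \<cdot>\<^sub>m 1\<^sub>m p * 1\<^sub>m p + - Cp * - Dp = Xp \<cdot>\<^sub>m 1\<^sub>m p + Cp * Dp" using Cp Dp by simp
    moreover have "Xp \<cdot>\<^sub>m 1\<^sub>m p * 0\<^sub>m p q + - Cp * 1\<^sub>m q = - Cp" using Cp by simp
    moreover have "Dp * 1\<^sub>m p + 1\<^sub>m q * - Dp = 0\<^sub>m q p" using Dp by (intro eq_matI) auto
    moreover have "Dp * 0\<^sub>m p q + 1\<^sub>m q * 1\<^sub>m q = 1\<^sub>m q" using Dp by simp
    ultimately show ?thesis by simp
  qed
  finally have UV1: "U * V1 = four_block_mat (Xp \<cdot>\<^sub>m 1\<^sub>m p + Cp * Dp) (- Cp) (0\<^sub>m q p) (1\<^sub>m q)" .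
  have "det U = det (U * V1)"
    using det_mult[OF U V1] det_four_block_mat_upper_right_zero[of "1\<^sub>m p" p "0\<^sub>m p q" q "- Dp" "1\<^sub>m q"] Dp
    by (simp add: V1_def)
  also have "\<dots> = det (Xp \<cdot>\<^sub>m 1\<^sub>m p + Cp * Dp)"
    unfolding UV1 using Cp Dp
    by (subst det_four_block_mat_lower_left_zero[of _ p _ q]) auto
  finally have dU: "det U = det (Xp \<cdot>\<^sub>m 1\<^sub>m p + Cp * Dp)" .
  have "V2 * U = four_block_mat (1\<^sub>m p * (Xp \<cdot>\<^sub>m 1\<^sub>m p) + 0\<^sub>m p q * Dp) (1\<^sub>m p * - Cp + 0\<^sub>m p q * 1\<^sub>m q)
      (- Dp * (Xp \<cdot>\<^sub>m 1\<^sub>m p) + Xp \<cdot>\<^sub>m 1\<^sub>m q * Dp) (- Dp * - Cp + Xp \<cdot>\<^sub>m 1\<^sub>m q * 1\<^sub>m q)"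
    unfolding U_def V2_def by (rule mult_four_block_mat) (use Cp Dp in auto)
  also have "\<dots> = four_block_mat (Xp \<cdot>\<^sub>m 1\<^sub>m p) (- Cp) (0\<^sub>m q p) (Xp \<cdot>\<^sub>m 1\<^sub>m q + Dp * Cp)"
  proof -
    have "1\<^sub>m p * (Xp \<cdot>\<^sub>m 1\<^sub>m p) + 0\<^sub>m p q * Dp = Xp \<cdot>\<^sub>m 1\<^sub>m p" using Dp by simp
    moreover have "1\<^sub>m p * - Cp + 0\<^sub>m p q * 1\<^sub>m q = - Cp" using Cp by simp
    moreover have "- Dp * (Xp \<cdot>\<^sub>m 1\<^sub>m p) + Xp \<cdot>\<^sub>m 1\<^sub>m q * Dp = 0\<^sub>m q p"
    proof -
      have "- Dp * (Xp \<cdot>\<^sub>m 1\<^sub>m p) = - (Xp \<cdot>\<^sub>m Dp)"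
        using mult_smult_distrib[OF Dp, of "1\<^sub>m p" p Xp] Dp by simp
      moreover have "Xp \<cdot>\<^sub>m 1\<^sub>m q * Dp = Xp \<cdot>\<^sub>m Dp"
        using mult_smult_assoc_mat[of "1\<^sub>m q" q q Dp p Xp] Dp by simp
      ultimately show ?thesis using Dp by simp
    qed
    moreover have "- Dp * - Cp + Xp \<cdot>\<^sub>m 1\<^sub>m q * 1\<^sub>m q = Xp \<cdot>\<^sub>m 1\<^sub>m q + Dp * Cp" using Cp Dp
      by (intro eq_matI) (auto simp: ac_simps)
    ultimately show ?thesis by simp
  qed
  finally have V2U: "V2 * U = four_block_mat (Xp \<cdot>\<^sub>m 1\<^sub>m p) (- Cp) (0\<^sub>m q p) (Xp \<cdot>\<^sub>m 1\<^sub>m q + Dp * Cp)" .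
  have "Xp^q * det U = det (V2 * U)"
    using det_mult[OF V2 U] det_four_block_mat_upper_right_zero[of "1\<^sub>m p" p "0\<^sub>m p q" q "- Dp" "Xp \<cdot>\<^sub>m 1\<^sub>m q"] Dp
    by (simp add: V2_def)
  also have "\<dots> = Xp^p * det (Xp \<cdot>\<^sub>m 1\<^sub>m q + Dp * Cp)"
    unfolding V2U using Cp Dp
    by (subst det_four_block_mat_lower_left_zero[of _ p _ q]) auto
  finally show ?thesis unfolding dU .
qed



lemma Xpow_coeff: "coeff ([:0,1:]^k * [:d:]) e = (if e = k then d else (0::'a::comm_ring_1))"
proof -
  have "[:0,1:]^k * [:d:] = monom d k"
    by (simp add: monom_altdef mult.commute)
  then show ?thesis by (simp add: coeff_monom)
qed

lemma Xpow_coeff2: "coeff ([:0,1:]^k) e = (if e = k then 1 else (0::'a::comm_ring_1))"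
proof -
  have "[:0,1:]^k = (monom 1 k :: 'a poly)"
    by (simp add: monom_altdef)
  then show ?thesis by (simp add: coeff_monom)
qed

lemma Xpow_coeff3: "coeff ((pCons 0 1)^k) e = (if e = k then 1 else (0::'a::comm_ring_1))"
  using Xpow_coeff2[of k e] by (simp add: one_pCons)

lemma submatrix_map_mat: "submatrix (map_mat f M) I J = map_mat f (submatrix M I J)"
proof (rule eq_matI)
  fix i j assume i: "i < dim_row (map_mat f (submatrix M I J))" and j: "j < dim_col (map_mat f (submatrix M I J))"
  have i': "i < card {i. i < dim_row M \<and> i \<in> I}" using i by (simp add: dim_submatrix)
  have j': "j < card {j. j < dim_col M \<and> j \<in> J}" using j by (simp add: dim_submatrix)
  show "submatrix (map_mat f M) I J $$ (i, j) = map_mat f (submatrix M I J) $$ (i, j)"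
    using i' j' pick_le[OF i'] pick_le[OF j'] by (simp add: submatrix_def)
qed (auto simp: submatrix_def)


definition diagp :: "nat \<Rightarrow> (nat \<Rightarrow> 'a::zero) \<Rightarrow> 'a mat" where
  "diagp m c = mat m m (\<lambda>(i,k). if i = k then c i else 0)"

interpretation cl: comm_ring_hom "\<lambda>a::'a::comm_ring_1. [:a:]"
  by (unfold_locales) (auto simp: one_pCons)

lemma det_char_coeff:
  fixes M :: "'a::comm_ring_1 mat"
  assumes M: "M \<in> carrier_mat m m" and J: "J \<subseteq> {..<m}"
  shows "coeff (det (map_mat (\<lambda>a. [:a:]) M + diagp m (\<lambda>i. if i \<in> J then 0 else [:0,1:]))) e
    = (\<Sum>S \<in> {S. S \<subseteq> {..<m} \<and> J \<subseteq> S \<and> m - card S = e}. det (submatrix M S S))"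
proof -
  define U where "U = {..<m}"
  define c where "c = (\<lambda>i. if i \<in> J then 0 else [:0,1:] :: 'a poly)"
  have Mp: "map_mat (\<lambda>a. [:a:]) M \<in> carrier_mat m m" using M by simp
  have "det (map_mat (\<lambda>a. [:a:]) M + diagp m c) =
      (\<Sum>S\<in>Pow U. (\<Prod>i\<in>U - S. c i) * det (submatrix (map_mat (\<lambda>a. [:a:]) M) S S))"
    unfolding diagp_def U_def by (rule det_plus_diag[OF Mp])
  also have "\<dots> = (\<Sum>S\<in>Pow U. (if J \<subseteq> S then [:0,1:] ^ (m - card S) else 0) * [:det (submatrix M S S):])"
  proof (rule sum.cong[OF refl])
    fix S assume S: "S \<in> Pow U"
    have fin: "finite (U - S)" unfolding U_def by simp
    have cardUS: "card (U - S) = m - card S" using S unfolding U_def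
      by (subst card_Diff_subset) (auto intro: finite_subset)
    have "(\<Prod>i\<in>U - S. c i) = (if J \<subseteq> S then [:0,1:] ^ (m - card S) else 0)"
    proof (cases "J \<subseteq> S")
      case True
      hence "(\<Prod>i\<in>U - S. c i) = (\<Prod>i\<in>U - S. [:0,1:])" unfolding c_def by (intro prod.cong) auto
      then show ?thesis using True cardUS by simp
    next
      case False
      then obtain i where "i \<in> J" "i \<notin> S" by auto
      hence "i \<in> U - S" "c i = 0" using J unfolding c_def U_def by auto
      hence "(\<Prod>i\<in>U - S. c i) = 0" using fin by (intro prod_zero) auto
      then show ?thesis using False by simp
    qed
    moreover have "det (submatrix (map_mat (\<lambda>a. [:a:]) M) S S) = [:det (submatrix M S S):]"
      unfolding submatrix_map_mat by (rule cl.hom_det)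
    ultimately show "(\<Prod>i\<in>U - S. c i) * det (submatrix (map_mat (\<lambda>a. [:a:]) M) S S) =
      (if J \<subseteq> S then [:0,1:] ^ (m - card S) else 0) * [:det (submatrix M S S):]" by simp
  qed
  finally have "coeff (det (map_mat (\<lambda>a. [:a:]) M + diagp m c)) e =
     (\<Sum>S\<in>Pow U. coeff ((if J \<subseteq> S then [:0,1:] ^ (m - card S) else 0) * [:det (submatrix M S S):]) e)"
    by (simp add: coeff_sum)
  also have "\<dots> = (\<Sum>S\<in>Pow U. if J \<subseteq> S \<and> m - card S = e then det (submatrix M S S) else 0)"
    by (intro sum.cong refl) (simp add: Xpow_coeff3)
  also have "\<dots> = (\<Sum>S \<in> {S. S \<subseteq> {..<m} \<and> J \<subseteq> S \<and> m - card S = e}. det (submatrix M S S))"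
    by (subst sum.inter_filter[symmetric]) (auto simp: U_def intro!: sum.cong)
  finally show ?thesis unfolding c_def .
qed


interpretation cnjh: comm_ring_hom cnj
  by unfold_locales auto

lemma ev0_hom: "comm_ring_hom (\<lambda>p::'a::comm_ring_1 poly. poly p 0)"
  by unfold_locales auto

lemma adj_carrier[simp]: "A \<in> carrier_mat m n \<Longrightarrow> mat_adjoint A \<in> carrier_mat n m"
  unfolding mat_adjoint_def by (auto simp: mat_of_rows_def)

lemma adj_dims[simp]: "dim_row (mat_adjoint A) = dim_col A" "dim_col (mat_adjoint A) = dim_row A"
  unfolding mat_adjoint_def by (auto simp: mat_of_rows_def)

lemma adj_index[simp]: "i < dim_col A \<Longrightarrow> j < dim_row A \<Longrightarrow> mat_adjoint A $$ (i,j) = cnj (A $$ (j,i))"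
  unfolding mat_adjoint_def by (auto simp: mat_of_rows_def conjugate_complex_def)

lemma det_adj:
  fixes K :: "complex mat"
  assumes K: "K \<in> carrier_mat k k"
  shows "det (mat_adjoint K) = cnj (det K)"
proof -
  have "mat_adjoint K = transpose_mat (map_mat cnj K)"
    using K by (intro eq_matI) auto
  then show ?thesis using K by (simp add: det_transpose)
qed

lemma submatrix_UNIV_idx: 
  assumes "i < dim_row M" "j < card {j. j < dim_col M \<and> j \<in> T}"
  shows "submatrix M UNIV T $$ (i, j) = M $$ (i, pick T j)"
  using assms by (simp add: submatrix_def pick_UNIV)

lemma cauchy_binet_adj:
  fixes C :: "complex mat"
  assumes C: "C \<in> carrier_mat k q"
  shows "det (C * mat_adjoint C) = (\<Sum>T \<in> index_sets k q. complex_of_real ((cmod (det (submatrix C UNIV T)))^2))"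
proof -
  define D where "D = mat_adjoint C"
  have D: "D \<in> carrier_mat q k" unfolding D_def using C by simp
  define Xp where "Xp = ([:0,1:] :: complex poly)"
  define Cp where "Cp = map_mat (\<lambda>a. [:a:]) C"
  define Dp where "Dp = map_mat (\<lambda>a. [:a:]) D"
  have syl: "Xp^q * det (Xp \<cdot>\<^sub>m 1\<^sub>m k + Cp * Dp) = Xp^k * det (Xp \<cdot>\<^sub>m 1\<^sub>m q + Dp * Cp)"
    unfolding Xp_def Cp_def Dp_def by (rule sylvester_poly[OF C D])
  have e1: "Xp \<cdot>\<^sub>m 1\<^sub>m k + Cp * Dp = map_mat (\<lambda>a. [:a:]) (C * D) + diagp k (\<lambda>i. if i \<in> {} then 0 else [:0,1:])"
    unfolding Cp_def Dp_def Xp_def diagp_def using C D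
    by (subst cl.mat_hom_mult[OF C D, symmetric]) (intro eq_matI, auto)
  have e2: "Xp \<cdot>\<^sub>m 1\<^sub>m q + Dp * Cp = map_mat (\<lambda>a. [:a:]) (D * C) + diagp q (\<lambda>i. if i \<in> {} then 0 else [:0,1:])"
    unfolding Cp_def Dp_def Xp_def diagp_def using C D
    by (subst cl.mat_hom_mult[OF D C, symmetric]) (intro eq_matI, auto)
  define P1 where "P1 = det (map_mat (\<lambda>a. [:a:]) (C * D) + diagp k (\<lambda>i. if i \<in> {} then 0 else [:0,1:]))"
  define P2 where "P2 = det (map_mat (\<lambda>a. [:a:]) (D * C) + diagp q (\<lambda>i. if i \<in> {} then 0 else [:0,1:]))"
  have syl2: "Xp^q * P1 = Xp^k * P2" using syl unfolding e1 e2 P1_def P2_def .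
  have Xmon: "Xp^i = monom 1 i" for i unfolding Xp_def by (simp add: monom_altdef)
  have "coeff (Xp^q * P1) q = coeff P1 0" unfolding Xmon by (simp add: coeff_monom_mult)
  also have "coeff P1 0 = poly P1 0" by (simp add: poly_0_coeff_0)
  also have "\<dots> = det (C * D)"
  proof -
    have "map_mat (\<lambda>p. poly p 0) (map_mat (\<lambda>a. [:a:]) (C * D) + diagp k (\<lambda>i. if i \<in> {} then 0 else [:0,1:])) = C * D"
      using C D unfolding diagp_def by (intro eq_matI) auto
    then show ?thesis unfolding P1_def by (metis comm_ring_hom.hom_det[OF ev0_hom])
  qed
  finally have L: "coeff (Xp^q * P1) q = det (C * D)" .
  have "coeff (Xp^k * P2) q = (if k \<le> q then coeff P2 (q - k) else 0)"
    unfolding Xmon by (simp add: coeff_monom_mult)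
  also have "\<dots> = (\<Sum>T \<in> index_sets k q. det (submatrix (D * C) T T))"
  proof (cases "k \<le> q")
    case True
    have DC: "D * C \<in> carrier_mat q q" using C D by simp
    have "coeff P2 (q - k) = (\<Sum>T \<in> {T. T \<subseteq> {..<q} \<and> {} \<subseteq> T \<and> q - card T = q - k}. det (submatrix (D * C) T T))"
      unfolding P2_def by (rule det_char_coeff[OF DC]) simp
    also have "{T. T \<subseteq> {..<q} \<and> {} \<subseteq> T \<and> q - card T = q - k} = index_sets k q"
    proof -
      have "card T \<le> q" if "T \<subseteq> {..<q}" for T using card_mono[OF _ that] by simp
      then show ?thesis unfolding index_sets_def using True
        by (auto, metis diff_diff_cancel)
    qed
    finally show ?thesis using True by simp
  next
    case False
    have "index_sets k q = {}"
    proof -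
      have "card T \<le> q" if "T \<subseteq> {..<q}" for T using card_mono[OF _ that] by simp
      then show ?thesis unfolding index_sets_def using False by fastforce
    qed
    then show ?thesis using False by simp
  qed
  also have "\<dots> = (\<Sum>T \<in> index_sets k q. complex_of_real ((cmod (det (submatrix C UNIV T)))^2))"
  proof (rule sum.cong[OF refl])
    fix T assume T: "T \<in> index_sets k q"
    hence Tq: "T \<subseteq> {..<q}" and cT: "card T = k" unfolding index_sets_def by auto
    have cT': "{j. j < q \<and> j \<in> T} = T" using Tq by auto
    define CT where "CT = submatrix C UNIV T"
    have CT: "CT \<in> carrier_mat k k" unfolding CT_def using C cT cT' by (intro carrier_matI) (auto simp: dim_submatrix)
    have "submatrix (D * C) T T = mat_adjoint CT * CT"
    proof (rule eq_matI)
      show "dim_row (submatrix (D * C) T T) = dim_row (mat_adjoint CT * CT)"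
        using C D CT cT' cT by (simp add: dim_submatrix)
      show "dim_col (submatrix (D * C) T T) = dim_col (mat_adjoint CT * CT)"
        using C D CT cT' cT by (simp add: dim_submatrix)
      fix a b assume a: "a < dim_row (mat_adjoint CT * CT)" and b: "b < dim_col (mat_adjoint CT * CT)"
      have a': "a < k" "b < k" using a b CT by auto
      have pa: "pick T a < q" "pick T b < q" using a' pick_le[of a "q" T] pick_le[of b q T] cT cT' by auto
      have "submatrix (D * C) T T $$ (a, b) = (D * C) $$ (pick T a, pick T b)"
        using a' C D cT cT' by (simp add: submatrix_def)
      also have "\<dots> = (\<Sum>l<k. cnj (C $$ (l, pick T a)) * C $$ (l, pick T b))"
        using pa C D unfolding D_def by (simp add: scalar_prod_def lessThan_atLeast0)
      also have "\<dots> = (mat_adjoint CT * CT) $$ (a, b)"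
        using a' CT C cT cT' unfolding CT_def by (simp add: scalar_prod_def lessThan_atLeast0 submatrix_def pick_UNIV)
      finally show "submatrix (D * C) T T $$ (a, b) = (mat_adjoint CT * CT) $$ (a, b)" .
    qed
    then have "det (submatrix (D * C) T T) = cnj (det CT) * det CT"
      using det_mult[OF adj_carrier[OF CT] CT] det_adj[OF CT] by simp
    also have "\<dots> = complex_of_real ((cmod (det CT))^2)"
      by (metis complex_norm_square mult.commute)
    finally show "det (submatrix (D * C) T T) = complex_of_real ((cmod (det (submatrix C UNIV T)))^2)"
      unfolding CT_def .
  qed
  finally have R: "coeff (Xp^k * P2) q = (\<Sum>T \<in> index_sets k q. complex_of_real ((cmod (det (submatrix C UNIV T)))^2))" .
  show ?thesis using L R syl2 unfolding D_def by simp
qed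


lemma (in vec_space) indep_cols_exist:
  assumes A: "A \<in> carrier_mat n nc"
  shows "\<exists>T. T \<subseteq> {..<nc} \<and> card T = rank A \<and>
     (\<forall>w \<in> carrier_vec (card T). submatrix A UNIV T *\<^sub>v w = 0\<^sub>v n \<longrightarrow> w = 0\<^sub>v (card T))"
proof -
  obtain S where maxS: "maximal S (\<lambda>T. T \<subseteq> set (cols A) \<and> lin_indpt T)"
    using maximal_exists[of "(\<lambda>T. T \<subseteq> set (cols A) \<and> lin_indpt T)" "card (set (cols A))" "{}"]
    by (meson List.finite_set card_mono empty_iff empty_subsetI finite_lin_indpt2 rev_finite_subset)
  have rk: "rank A = card S" using rank_card_indpt[OF A maxS] .
  have Ssub: "S \<subseteq> set (cols A)" and Sind: "lin_indpt S" using maxS unfolding maximal_def by auto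
  define T where "T = {j. j < nc \<and> col A j \<in> S \<and> (\<forall>j'<j. col A j' \<noteq> col A j)}"
  have Tsub: "T \<subseteq> {..<nc}" unfolding T_def by auto
  have bij: "bij_betw (col A) T S"
  proof (rule bij_betw_imageI)
    show "inj_on (col A) T"
    proof (rule inj_onI)
      fix x y assume x: "x \<in> T" and y: "y \<in> T" and e: "col A x = col A y"
      show "x = y"
      proof (rule ccontr)
        assume "x \<noteq> y"
        then consider "x < y" | "y < x" by linarith
        then show False using x y e unfolding T_def by cases auto
      qed
    qed
    show "col A ` T = S"
    proof
      show "col A ` T \<subseteq> S" unfolding T_def by auto
      show "S \<subseteq> col A ` T"
      proof
        fix v assume v: "v \<in> S"
        then obtain j where j: "j < nc" "col A j = v" using Ssub A
          by (auto simp: cols_def in_set_conv_nth)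
        define j0 where "j0 = (LEAST j. j < nc \<and> col A j = v)"
        have j0: "j0 < nc \<and> col A j0 = v" unfolding j0_def by (rule LeastI[of _ j]) (use j in auto)
        have "\<forall>j'<j0. col A j' \<noteq> col A j0"
        proof (intro allI impI)
          fix j' assume "j' < j0"
          then have "\<not> (j' < nc \<and> col A j' = v)" unfolding j0_def by (rule not_less_Least)
          then show "col A j' \<noteq> col A j0" using j0 \<open>j' < j0\<close> by auto
        qed
        then have "j0 \<in> T" unfolding T_def using j0 v by auto
        then show "v \<in> col A ` T" using j0 by force
      qed
    qed
  qed
  have cardT: "card T = card S" using bij_betw_same_card[OF bij] .
  have finT: "finite T" using Tsub finite_subset by blast
  define AT where "AT = submatrix A UNIV T"
  have cT: "{j. j < nc \<and> j \<in> T} = T" using Tsub by auto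
  have AT: "AT \<in> carrier_mat n (card T)" unfolding AT_def using A cT
    by (intro carrier_matI) (auto simp: dim_submatrix)
  have colAT: "col AT b = col A (pick T b)" if b: "b < card T" for b
  proof (rule eq_vecI)
    show "dim_vec (col AT b) = dim_vec (col A (pick T b))" using AT A by simp
    fix i assume "i < dim_vec (col A (pick T b))"
    hence i: "i < n" using A by simp
    have pb: "pick T b < nc" using pick_le[of b nc T] b cT by simp
    show "col AT b $ i = col A (pick T b) $ i"
      using i b AT A pb cT unfolding AT_def by (simp add: submatrix_def pick_UNIV)
  qed
  have pbT: "pick T b \<in> T" if "b < card T" for b using pick_in_set_le[OF that] .
  have setc: "set (cols AT) = S"
  proof -
    have "set (cols AT) = (\<lambda>b. col AT b) ` {..<card T}" using AT by (auto simp: cols_def)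
    also have "\<dots> = col A ` (pick T ` {..<card T})" using colAT by (auto simp: image_image)
    also have "pick T ` {..<card T} = T" using pick_bij(1)[OF finT] by (simp add: bij_betw_def)
    finally show ?thesis using bij by (simp add: bij_betw_def)
  qed
  have dist: "distinct (cols AT)"
  proof -
    have "inj_on (\<lambda>b. col AT b) {..<card T}"
    proof (rule inj_onI)
      fix a b assume a: "a \<in> {..<card T}" and b: "b \<in> {..<card T}" and e: "col AT a = col AT b"
      hence "col A (pick T a) = col A (pick T b)" using colAT by simp
      hence "pick T a = pick T b" using bij pbT a b by (auto simp: bij_betw_def inj_on_def)
      then show "a = b" using pick_bij(2)[OF finT] a b by (metis lessThan_iff)
    qed
    then show ?thesis using AT unfolding cols_def by (simp add: distinct_map atLeast_upt)
  qed
  have "\<forall>w \<in> carrier_vec (card T). AT *\<^sub>v w = 0\<^sub>v n \<longrightarrow> w = 0\<^sub>v (card T)"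
  proof (intro ballI impI)
    fix w assume w: "w \<in> carrier_vec (card T)" and z: "AT *\<^sub>v w = 0\<^sub>v n"
    show "w = 0\<^sub>v (card T)"
    proof (rule ccontr)
      assume "w \<noteq> 0\<^sub>v (card T)"
      from lin_depI[OF AT w this z dist] have "lin_dep S" using setc by simp
      then show False using Sind by simp
    qed
  qed
  then show ?thesis using Tsub cardT rk unfolding AT_def by auto
qed


lemma adj_adj: "mat_adjoint (mat_adjoint (K :: complex mat)) = K"
  by (intro eq_matI) auto

lemma quad_form:
  fixes K :: "complex mat"
  assumes K: "K \<in> carrier_mat p r" and v: "v \<in> carrier_vec r"
  shows "(\<Sum>a<r. cnj (v$a) * ((mat_adjoint K * K) *\<^sub>v v)$a) = (\<Sum>l<p. cnj ((K *\<^sub>v v)$l) * (K *\<^sub>v v)$l)"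
proof -
  have "(\<Sum>a<r. cnj (v$a) * ((mat_adjoint K * K) *\<^sub>v v)$a)
     = (\<Sum>a<r. cnj (v$a) * (\<Sum>b<r. (\<Sum>l<p. cnj (K $$ (l,a)) * K $$ (l,b)) * v$b))"
    using K v by (intro sum.cong refl) (simp add: scalar_prod_def lessThan_atLeast0)
  also have "\<dots> = (\<Sum>a<r. \<Sum>b<r. \<Sum>l<p. (cnj (v$a) * cnj (K $$ (l,a))) * (K $$ (l,b) * v$b))"
    by (intro sum.cong refl) (simp add: sum_distrib_left sum_distrib_right mult.assoc mult.left_commute)
  also have "\<dots> = (\<Sum>a<r. \<Sum>l<p. \<Sum>b<r. (cnj (v$a) * cnj (K $$ (l,a))) * (K $$ (l,b) * v$b))"
    by (rule sum.cong[OF refl], rule sum.swap)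
  also have "\<dots> = (\<Sum>l<p. \<Sum>a<r. \<Sum>b<r. (cnj (v$a) * cnj (K $$ (l,a))) * (K $$ (l,b) * v$b))"
    by (rule sum.swap)
  also have "\<dots> = (\<Sum>l<p. (\<Sum>a<r. cnj (v$a) * cnj (K $$ (l,a))) * (\<Sum>b<r. K $$ (l,b) * v$b))"
    by (simp add: sum_product)
  also have "\<dots> = (\<Sum>l<p. cnj ((K *\<^sub>v v)$l) * (K *\<^sub>v v)$l)"
  proof (intro sum.cong refl)
    fix l assume l: "l \<in> {..<p}"
    have "(K *\<^sub>v v)$l = (\<Sum>b<r. K $$ (l,b) * v$b)"
      using K v l by (simp add: scalar_prod_def lessThan_atLeast0)
    then show "(\<Sum>a<r. cnj (v$a) * cnj (K $$ (l,a))) * (\<Sum>b<r. K $$ (l,b) * v$b) = cnj ((K *\<^sub>v v)$l) * (K *\<^sub>v v)$l"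
      by (simp add: mult.commute)
  qed
  finally show ?thesis .
qed

lemma sum_cnj_sq_zero:
  fixes u :: "nat \<Rightarrow> complex"
  assumes "(\<Sum>l<p. cnj (u l) * u l) = 0"
  shows "\<forall>l<p. u l = 0"
proof -
  have "(\<Sum>l<p. cnj (u l) * u l) = complex_of_real (\<Sum>l<p. (cmod (u l))^2)"
    unfolding of_real_sum by (intro sum.cong refl) (metis complex_norm_square mult.commute)
  then have "(\<Sum>l<p. (cmod (u l))^2) = 0" using assms by (metis of_real_eq_0_iff)
  then have "\<forall>l\<in>{..<p}. (cmod (u l))^2 = 0" by (subst sum_nonneg_eq_0_iff[symmetric]) auto
  then show ?thesis by auto
qed

lemma exists_minor:
  fixes A :: "complex mat"
  assumes A: "A \<in> carrier_mat m n"
  shows "\<exists>S T. S \<in> index_sets (vec_space.rank m A) m \<and> T \<in> index_sets (vec_space.rank m A) n \<and> det (submatrix A S T) \<noteq> 0"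
proof -
  obtain T where Tsub: "T \<subseteq> {..<n}" and cT: "card T = vec_space.rank m A"
    and inj: "\<forall>w \<in> carrier_vec (card T). submatrix A UNIV T *\<^sub>v w = 0\<^sub>v m \<longrightarrow> w = 0\<^sub>v (card T)"
    using vec_space.indep_cols_exist[OF A] by blast
  define r where "r = card T"
  define AT where "AT = submatrix A UNIV T"
  have cT': "{j. j < n \<and> j \<in> T} = T" using Tsub by auto
  have AT: "AT \<in> carrier_mat m r" unfolding AT_def r_def using A cT'
    by (intro carrier_matI) (auto simp: dim_submatrix)
  define G where "G = mat_adjoint AT * AT"
  have G: "G \<in> carrier_mat r r" unfolding G_def by (rule mult_carrier_mat[OF adj_carrier[OF AT] AT])
  have dG: "det G \<noteq> 0"
  proof
    assume "det G = 0"
    then obtain v where v: "v \<in> carrier_vec r" "v \<noteq> 0\<^sub>v r" "G *\<^sub>v v = 0\<^sub>v r"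
      using det_0_iff_vec_prod_zero_field[OF G] by blast
    have "(\<Sum>l<m. cnj ((AT *\<^sub>v v)$l) * (AT *\<^sub>v v)$l) = 0"
      using quad_form[OF AT v(1)] v(3) unfolding G_def by simp
    then have "\<forall>l<m. (AT *\<^sub>v v)$l = 0" by (rule sum_cnj_sq_zero)
    then have "AT *\<^sub>v v = 0\<^sub>v m" using AT by (intro eq_vecI) auto
    then have "v = 0\<^sub>v r" using inj v(1) unfolding AT_def r_def by auto
    then show False using v(2) by simp
  qed
  have ATa: "mat_adjoint AT \<in> carrier_mat r m" by (rule adj_carrier[OF AT])
  have "det (mat_adjoint AT * mat_adjoint (mat_adjoint AT)) \<noteq> 0" using dG unfolding G_def adj_adj .
  then have "(\<Sum>S \<in> index_sets r m. complex_of_real ((cmod (det (submatrix (mat_adjoint AT) UNIV S)))^2)) \<noteq> 0"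
    unfolding cauchy_binet_adj[OF ATa] .
  then have "\<exists>S \<in> index_sets r m. det (submatrix (mat_adjoint AT) UNIV S) \<noteq> 0"
    by (rule contrapos_np) (auto intro!: sum.neutral)
  then obtain S where S: "S \<in> index_sets r m" and dS: "det (submatrix (mat_adjoint AT) UNIV S) \<noteq> 0"
    by blast
  have Sm: "S \<subseteq> {..<m}" and cS: "card S = r" using S unfolding index_sets_def by auto
  have cS': "{j. j < m \<and> j \<in> S} = S" using Sm by auto
  have AST: "submatrix A S T \<in> carrier_mat r r" using A cS' cT' cS unfolding r_def
    by (intro carrier_matI) (auto simp: dim_submatrix)
  have "submatrix (mat_adjoint AT) UNIV S = mat_adjoint (submatrix A S T)"
  proof (rule eq_matI)
    show "dim_row (submatrix (mat_adjoint AT) UNIV S) = dim_row (mat_adjoint (submatrix A S T))"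
      using AT AST A cT' unfolding r_def by (simp add: dim_submatrix)
    show "dim_col (submatrix (mat_adjoint AT) UNIV S) = dim_col (mat_adjoint (submatrix A S T))"
      using AT AST cS' cS A cT' unfolding r_def AT_def by (simp add: dim_submatrix)
    fix a b assume a: "a < dim_row (mat_adjoint (submatrix A S T))" and b: "b < dim_col (mat_adjoint (submatrix A S T))"
    have ab: "a < r" "b < r" using a b AST by auto
    have pS: "pick S b < m" using pick_le[of b m S] ab cS' cS by simp
    have pT: "pick T a < n" using pick_le[of a n T] ab cT' unfolding r_def by simp
    show "submatrix (mat_adjoint AT) UNIV S $$ (a, b) = mat_adjoint (submatrix A S T) $$ (a, b)"
      using ab pS pT AT AST A cS' cT' cS unfolding AT_def r_def
      by (simp add: submatrix_def pick_UNIV)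
  qed
  then have "det (submatrix A S T) \<noteq> 0" using dS det_adj[OF AST] by auto
  moreover have "T \<in> index_sets r n" using Tsub unfolding index_sets_def r_def by auto
  ultimately show ?thesis using S cT unfolding r_def by metis
qed


lemma finite_index_sets[simp]: "finite (index_sets k m)"
  unfolding index_sets_def by (rule finite_subset[of _ "Pow {..<m}"]) auto

lemma principal_minor_H:
  fixes A :: "complex mat"
  assumes A: "A \<in> carrier_mat m n" and S: "S \<subseteq> {..<m}"
  shows "det (submatrix (A * mat_adjoint A) S S) =
    (\<Sum>T \<in> index_sets (card S) n. complex_of_real ((cmod (det (submatrix A S T)))^2))"
proof -
  define AS where "AS = submatrix A S UNIV"
  have cS: "{i. i < m \<and> i \<in> S} = S" using S by auto
  have AS: "AS \<in> carrier_mat (card S) n" unfolding AS_def using A cS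
    by (intro carrier_matI) (auto simp: dim_submatrix)
  have "submatrix (A * mat_adjoint A) S S = AS * mat_adjoint AS"
  proof (rule eq_matI)
    show "dim_row (submatrix (A * mat_adjoint A) S S) = dim_row (AS * mat_adjoint AS)"
      using A AS cS by (simp add: dim_submatrix)
    show "dim_col (submatrix (A * mat_adjoint A) S S) = dim_col (AS * mat_adjoint AS)"
      using A AS cS by (simp add: dim_submatrix)
    fix a b assume a: "a < dim_row (AS * mat_adjoint AS)" and b: "b < dim_col (AS * mat_adjoint AS)"
    have ab: "a < card S" "b < card S" using a b AS by auto
    have pa: "pick S a < m" "pick S b < m" using pick_le[of a m S] pick_le[of b m S] ab cS by auto
    show "submatrix (A * mat_adjoint A) S S $$ (a, b) = (AS * mat_adjoint AS) $$ (a, b)"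
      using ab pa A AS cS unfolding AS_def
      by (simp add: submatrix_def pick_UNIV scalar_prod_def)
  qed
  then have "det (submatrix (A * mat_adjoint A) S S) =
     (\<Sum>T \<in> index_sets (card S) n. complex_of_real ((cmod (det (submatrix AS UNIV T)))^2))"
    using cauchy_binet_adj[OF AS] by simp
  also have "\<dots> = (\<Sum>T \<in> index_sets (card S) n. complex_of_real ((cmod (det (submatrix A S T)))^2))"
  proof (rule sum.cong[OF refl])
    fix T
    have "submatrix AS UNIV T = submatrix A S T"
    proof (rule eq_matI)
      show "dim_row (submatrix AS UNIV T) = dim_row (submatrix A S T)"
        using AS A cS by (simp add: dim_submatrix)
      show "dim_col (submatrix AS UNIV T) = dim_col (submatrix A S T)"
        using AS A cS by (simp add: dim_submatrix)
      fix a b assume a: "a < dim_row (submatrix A S T)" and b: "b < dim_col (submatrix A S T)"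
      have a': "a < card S" using a A cS by (simp add: dim_submatrix)
      have b': "b < card {j. j < n \<and> j \<in> T}" using b A by (simp add: dim_submatrix)
      show "submatrix AS UNIV T $$ (a, b) = submatrix A S T $$ (a, b)"
        using a' b' AS A cS pick_le[OF b'] pick_le[of a m S] unfolding AS_def
        by (simp add: submatrix_def pick_UNIV)
    qed
    then show "complex_of_real ((cmod (det (submatrix AS UNIV T)))^2) = complex_of_real ((cmod (det (submatrix A S T)))^2)"
      by simp
  qed
  finally show ?thesis .
qed

lemma eH_real:
  fixes A :: "complex mat"
  assumes A: "A \<in> carrier_mat m n"
  shows "(\<Sum>S \<in> index_sets k m. det (principal_submatrix (A * mat_adjoint A) S)) =
     complex_of_real (\<Sum>S \<in> index_sets k m. \<Sum>T \<in> index_sets k n. (cmod (det (submatrix A S T)))^2)"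
  unfolding of_real_sum principal_submatrix_def
  by (intro sum.cong refl) (auto simp: principal_minor_H[OF A] index_sets_def of_real_sum)

lemma eH_zero:
  fixes A :: "complex mat"
  assumes A: "A \<in> carrier_mat m n" and k: "k > vec_space.rank m A"
  shows "(\<Sum>S \<in> index_sets k m. det (principal_submatrix (A * mat_adjoint A) S)) = 0"
proof -
  have "det (submatrix A S T) = 0" if "S \<in> index_sets k m" "T \<in> index_sets k n" for S T
  proof (rule ccontr)
    assume "det (submatrix A S T) \<noteq> 0"
    from vec_space.rank_gt_minor[OF A this] have "card {j. j < n \<and> j \<in> T} \<le> vec_space.rank m A" .
    moreover have "{j. j < n \<and> j \<in> T} = T" using that unfolding index_sets_def by auto
    ultimately show False using that k unfolding index_sets_def by auto
  qed
  then show ?thesis unfolding eH_real[OF A] by simp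
qed

lemma eH_nonzero:
  fixes A :: "complex mat"
  assumes A: "A \<in> carrier_mat m n"
  shows "(\<Sum>S \<in> index_sets (vec_space.rank m A) m. det (principal_submatrix (A * mat_adjoint A) S)) \<noteq> 0"
proof -
  define r where "r = vec_space.rank m A"
  obtain S0 T0 where S0: "S0 \<in> index_sets r m" and T0: "T0 \<in> index_sets r n" and d: "det (submatrix A S0 T0) \<noteq> 0"
    using exists_minor[OF A] unfolding r_def by blast
  have "0 < (cmod (det (submatrix A S0 T0)))^2" using d by simp
  also have "\<dots> \<le> (\<Sum>T \<in> index_sets r n. (cmod (det (submatrix A S0 T)))^2)"
    by (rule member_le_sum[OF T0]) auto
  also have "\<dots> \<le> (\<Sum>S \<in> index_sets r m. \<Sum>T \<in> index_sets r n. (cmod (det (submatrix A S T)))^2)"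
    by (rule member_le_sum[OF S0, where f = "\<lambda>S. \<Sum>T \<in> index_sets r n. (cmod (det (submatrix A S T)))^2"])
      (auto intro: sum_nonneg)
  finally have pos: "0 < (\<Sum>S \<in> index_sets r m. \<Sum>T \<in> index_sets r n. (cmod (det (submatrix A S T)))^2)" .
  have nz: "complex_of_real X \<noteq> 0" if "X > 0" for X using that by simp
  show ?thesis unfolding eH_real[OF A] r_def[symmetric] by (rule nz[OF pos])
qed



lemma norm_add_sq: "(cmod (a + b))^2 = (cmod a)^2 + 2 * Re (cnj a * b) + (cmod b)^2"
  unfolding cmod_power2 by (simp add: power2_eq_square algebra_simps)

lemma perturb_zero:
  fixes u v :: "nat \<Rightarrow> complex"
  assumes fin: "finite N"
    and le: "\<And>c::complex. (\<Sum>l\<in>N. (cmod (u l))^2) \<le> (\<Sum>l\<in>N. (cmod (u l + c * v l))^2)"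
  shows "(\<Sum>l\<in>N. cnj (u l) * v l) = 0"
proof (rule ccontr)
  define g where "g = (\<Sum>l\<in>N. cnj (u l) * v l)"
  define K where "K = (\<Sum>l\<in>N. (cmod (v l))^2)"
  assume "(\<Sum>l\<in>N. cnj (u l) * v l) \<noteq> 0"
  hence g0: "g \<noteq> 0" unfolding g_def .
  have K0: "K \<ge> 0" unfolding K_def by (intro sum_nonneg) auto
  define t where "t = 1 / (K + 1)"
  have t0: "t > 0" unfolding t_def using K0 by simp
  have tK: "t * K < 1" unfolding t_def using K0 by (simp add: field_simps)
  define c where "c = - complex_of_real t * cnj g"
  have exp: "(\<Sum>l\<in>N. (cmod (u l + c * v l))^2) = (\<Sum>l\<in>N. (cmod (u l))^2) + 2 * Re (c * g) + (cmod c)^2 * K"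
  proof -
    have "(\<Sum>l\<in>N. (cmod (u l + c * v l))^2) = (\<Sum>l\<in>N. (cmod (u l))^2 + 2 * Re (c * (cnj (u l) * v l)) + (cmod c)^2 * (cmod (v l))^2)"
      by (intro sum.cong refl) (simp add: norm_add_sq norm_mult power_mult_distrib ac_simps)
    also have "\<dots> = (\<Sum>l\<in>N. (cmod (u l))^2) + 2 * Re (c * g) + (cmod c)^2 * K"
      unfolding g_def K_def by (simp add: sum.distrib sum_distrib_left Re_sum)
    finally show ?thesis .
  qed
  have Rcg: "Re (c * g) = - t * (cmod g)^2"
    unfolding c_def cmod_power2 by (simp add: power2_eq_square algebra_simps)
  have cc: "(cmod c)^2 = t^2 * (cmod g)^2"
    unfolding c_def using t0 by (simp add: norm_mult power_mult_distrib)
  have "0 \<le> 2 * Re (c * g) + (cmod c)^2 * K" using le[of c] unfolding exp by simp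
  also have "\<dots> = t * (cmod g)^2 * (t * K - 2)" unfolding Rcg cc by (simp add: algebra_simps power2_eq_square)
  also have "\<dots> < 0"
  proof -
    have "t * (cmod g)^2 > 0" using t0 g0 by simp
    moreover have "t * K - 2 < 0" using tK by simp
    ultimately show ?thesis by (simp add: mult_pos_neg)
  qed
  finally show False by simp
qed

lemma frob_le_sum:
  assumes "frob_norm M \<le> frob_norm N"
  shows "(\<Sum>i<dim_row M. \<Sum>k<dim_col M. (cmod (M $$ (i,k)))^2) \<le> (\<Sum>i<dim_row N. \<Sum>k<dim_col N. (cmod (N $$ (i,k)))^2)"
  using assms unfolding frob_norm_def
  by (subst real_sqrt_le_iff[symmetric]) (auto intro!: sum_nonneg)

lemma row_perturb:
  assumes M: "M \<in> carrier_mat nr nc" and N: "N \<in> carrier_mat nr nc" and i: "i < nr"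
    and same: "\<And>a p. a < nr \<Longrightarrow> a \<noteq> i \<Longrightarrow> p < nc \<Longrightarrow> N $$ (a,p) = M $$ (a,p)"
    and le: "frob_norm M \<le> frob_norm N"
  shows "(\<Sum>p<nc. (cmod (M $$ (i,p)))^2) \<le> (\<Sum>p<nc. (cmod (N $$ (i,p)))^2)"
proof -
  define f where "f = (\<lambda>a. \<Sum>p<nc. (cmod (M $$ (a,p)))^2)"
  define h where "h = (\<lambda>a. \<Sum>p<nc. (cmod (N $$ (a,p)))^2)"
  have "(\<Sum>a<nr. f a) \<le> (\<Sum>a<nr. h a)" using frob_le_sum[OF le] M N unfolding f_def h_def by simp
  moreover have "(\<Sum>a<nr. f a) = f i + (\<Sum>a\<in>{..<nr} - {i}. f a)" using i by (subst sum.remove[of _ i]) auto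
  moreover have "(\<Sum>a<nr. h a) = h i + (\<Sum>a\<in>{..<nr} - {i}. h a)" using i by (subst sum.remove[of _ i]) auto
  moreover have "(\<Sum>a\<in>{..<nr} - {i}. h a) = (\<Sum>a\<in>{..<nr} - {i}. f a)"
    unfolding f_def h_def by (intro sum.cong refl) (auto simp: same)
  ultimately show ?thesis unfolding f_def h_def by simp
qed


lemma mult_entry: "A \<in> carrier_mat nr n \<Longrightarrow> B \<in> carrier_mat n nc \<Longrightarrow> i < nr \<Longrightarrow> j < nc \<Longrightarrow>
  (A * B) $$ (i,j) = (\<Sum>l<n. A $$ (i,l) * B $$ (l,j))"
  by (simp add: scalar_prod_def lessThan_atLeast0)

lemma ls_normal:
  assumes A: "A \<in> carrier_mat m n" and B: "B \<in> carrier_mat s n" and X: "is_ls_solution A B X"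
    and i: "i < s" and k: "k < m"
  shows "(\<Sum>l<m. X $$ (i,l) * (\<Sum>p<n. A $$ (l,p) * cnj (A $$ (k,p)))) = (\<Sum>p<n. B $$ (i,p) * cnj (A $$ (k,p)))"
proof -
  have Xc: "X \<in> carrier_mat s m" and Xmin: "\<And>Y. Y \<in> carrier_mat s m \<Longrightarrow> frob_norm (X * A - B) \<le> frob_norm (Y * A - B)"
    using X A B unfolding is_ls_solution_def by auto
  define R where "R = X * A - B"
  have R: "R \<in> carrier_mat s n" unfolding R_def using Xc A B by auto
  have Rij: "R $$ (a,p) = (\<Sum>l<m. X $$ (a,l) * A $$ (l,p)) - B $$ (a,p)" if "a < s" "p < n" for a p
  proof -
    have "R $$ (a,p) = (X * A) $$ (a,p) - B $$ (a,p)" unfolding R_def using that Xc A B by simp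
    also have "(X * A) $$ (a,p) = (\<Sum>l<m. X $$ (a,l) * A $$ (l,p))" by (rule mult_entry[OF Xc A that])
    finally show ?thesis .
  qed
  have le: "(\<Sum>p<n. (cmod (R $$ (i,p)))^2) \<le> (\<Sum>p<n. (cmod (R $$ (i,p) + c * A $$ (k,p)))^2)" for c
  proof -
    define E where "E = mat s m (\<lambda>(a,b). if a = i \<and> b = k then (1::complex) else 0)"
    define Y where "Y = X + c \<cdot>\<^sub>m E"
    have Y: "Y \<in> carrier_mat s m" unfolding Y_def E_def using Xc by auto
    have YR: "Y * A - B \<in> carrier_mat s n" using Y A B by auto
    have YAB: "(Y * A - B) $$ (a,p) = R $$ (a,p) + (if a = i then c * A $$ (k,p) else 0)" if a: "a < s" and p: "p < n" for a p
    proof -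
      have "(Y * A) $$ (a,p) = (\<Sum>l<m. X $$ (a,l) * A $$ (l,p)) + (\<Sum>l<m. (if a = i \<and> l = k then c else 0) * A $$ (l,p))"
      proof -
        have Yal: "Y $$ (a,l) = X $$ (a,l) + (if a = i \<and> l = k then c else 0)" if "l < m" for l
          using a Xc that by (auto simp: Y_def E_def)
        have "(\<Sum>l<m. Y $$ (a,l) * A $$ (l,p)) = (\<Sum>l<m. X $$ (a,l) * A $$ (l,p) + (if a = i \<and> l = k then c else 0) * A $$ (l,p))"
          by (intro sum.cong refl) (simp add: Yal algebra_simps)
        then show ?thesis unfolding mult_entry[OF Y A a p] by (simp add: sum.distrib)
      qed
      also have "(\<Sum>l<m. (if a = i \<and> l = k then c else 0) * A $$ (l,p)) = (if a = i then c * A $$ (k,p) else 0)"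
        using k by (auto simp: if_distrib[of "\<lambda>x. x * _"] cong: if_cong)
      finally show ?thesis using Rij[OF a p] a p Y A B by simp
    qed
    have "(\<Sum>p<n. (cmod (R $$ (i,p)))^2) \<le> (\<Sum>p<n. (cmod ((Y * A - B) $$ (i,p)))^2)"
      by (rule row_perturb[OF R YR i]) (use YAB Xmin[OF Y] in \<open>auto simp: R_def\<close>)
    also have "\<dots> = (\<Sum>p<n. (cmod (R $$ (i,p) + c * A $$ (k,p)))^2)"
      using YAB[OF i] by simp
    finally show ?thesis .
  qed
  have "(\<Sum>p<n. cnj (R $$ (i,p)) * A $$ (k,p)) = 0"
    by (rule perturb_zero) (use le in auto)
  then have "cnj (\<Sum>p<n. cnj (R $$ (i,p)) * A $$ (k,p)) = 0" by simp
  then have z: "(\<Sum>p<n. R $$ (i,p) * cnj (A $$ (k,p))) = 0" by simp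
  have "(\<Sum>p<n. R $$ (i,p) * cnj (A $$ (k,p))) = 
     (\<Sum>p<n. (\<Sum>l<m. X $$ (i,l) * A $$ (l,p)) * cnj (A $$ (k,p))) - (\<Sum>p<n. B $$ (i,p) * cnj (A $$ (k,p)))"
    using i by (simp add: Rij sum_subtractf[symmetric] algebra_simps)
  also have "(\<Sum>p<n. (\<Sum>l<m. X $$ (i,l) * A $$ (l,p)) * cnj (A $$ (k,p)))
     = (\<Sum>l<m. X $$ (i,l) * (\<Sum>p<n. A $$ (l,p) * cnj (A $$ (k,p))))"
    by (simp add: sum_distrib_left sum_distrib_right mult.assoc) (rule sum.swap)
  finally show ?thesis using z by simp
qed

lemma ls_orth:
  assumes A: "A \<in> carrier_mat m n" and B: "B \<in> carrier_mat s n" and X: "is_min_norm_ls_solution A B X"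
    and i: "i < s" and z: "\<And>p. p < n \<Longrightarrow> (\<Sum>l<m. z l * A $$ (l,p)) = 0"
  shows "(\<Sum>l<m. X $$ (i,l) * cnj (z l)) = 0"
proof -
  have XL: "is_ls_solution A B X" and Xmin: "\<And>Y. is_ls_solution A B Y \<Longrightarrow> frob_norm X \<le> frob_norm Y"
    using X unfolding is_min_norm_ls_solution_def by auto
  have Xc: "X \<in> carrier_mat s m" and Xls: "\<And>Y. Y \<in> carrier_mat s m \<Longrightarrow> frob_norm (X * A - B) \<le> frob_norm (Y * A - B)"
    using XL A B unfolding is_ls_solution_def by auto
  have le: "(\<Sum>l<m. (cmod (X $$ (i,l)))^2) \<le> (\<Sum>l<m. (cmod (X $$ (i,l) + c * z l))^2)" for c
  proof -
    define Z where "Z = mat s m (\<lambda>(a,l). if a = i then z l else 0)"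
    define Y where "Y = X + c \<cdot>\<^sub>m Z"
    have Y: "Y \<in> carrier_mat s m" unfolding Y_def Z_def using Xc by auto
    have YA: "Y * A = X * A"
    proof (rule eq_matI)
      fix a p assume a: "a < dim_row (X * A)" and p: "p < dim_col (X * A)"
      have a': "a < s" and p': "p < n" using a p Xc A by auto
      have "(Y * A) $$ (a,p) = (\<Sum>l<m. X $$ (a,l) * A $$ (l,p)) + (if a = i then c * (\<Sum>l<m. z l * A $$ (l,p)) else 0)"
        unfolding mult_entry[OF Y A a' p'] using a' Xc
        by (simp add: Y_def Z_def sum.distrib algebra_simps sum_distrib_left)
      also have "\<dots> = (X * A) $$ (a,p)" using z[OF p'] mult_entry[OF Xc A a' p'] by simp
      finally show "(Y * A) $$ (a,p) = (X * A) $$ (a,p)" .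
    qed (use Y Xc A in auto)
    have "is_ls_solution A B Y" unfolding is_ls_solution_def using Y A B Xls YA by auto
    then have fl: "frob_norm X \<le> frob_norm Y" by (rule Xmin)
    have "(\<Sum>l<m. (cmod (X $$ (i,l)))^2) \<le> (\<Sum>l<m. (cmod (Y $$ (i,l)))^2)"
      by (rule row_perturb[OF Xc Y i _ fl]) (auto simp: Y_def Z_def)
    also have "\<dots> = (\<Sum>l<m. (cmod (X $$ (i,l) + c * z l))^2)"
      using i Xc by (intro sum.cong refl) (auto simp: Y_def Z_def)
    finally show ?thesis .
  qed
  have "(\<Sum>l<m. cnj (X $$ (i,l)) * z l) = 0"
    by (rule perturb_zero) (use le in auto)
  then have "cnj (\<Sum>l<m. cnj (X $$ (i,l)) * z l) = 0" by simp
  then show ?thesis by simp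
qed



lemma H_entry: "A \<in> carrier_mat m n \<Longrightarrow> k < m \<Longrightarrow> l < m \<Longrightarrow>
  (A * mat_adjoint A) $$ (k,l) = (\<Sum>p<n. A $$ (k,p) * cnj (A $$ (l,p)))"
  by (subst mult_entry[of _ m n _ m]) auto

lemma H_herm: assumes A: "A \<in> carrier_mat m n" and k: "k < m" and l: "l < m"
  shows "(A * mat_adjoint A) $$ (l,k) = cnj ((A * mat_adjoint A) $$ (k,l))"
proof -
  have 1: "(A * mat_adjoint A) $$ (l,k) = (\<Sum>p<n. A $$ (l,p) * cnj (A $$ (k,p)))" by (rule H_entry[OF A l k])
  have 2: "(A * mat_adjoint A) $$ (k,l) = (\<Sum>p<n. A $$ (k,p) * cnj (A $$ (l,p)))" by (rule H_entry[OF A k l])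
  show ?thesis unfolding 1 2 by (simp add: mult.commute)
qed

lemma null_A:
  fixes A :: "complex mat"
  assumes A: "A \<in> carrier_mat m n" and w: "\<forall>k<m. (\<Sum>l<m. (A * mat_adjoint A) $$ (k,l) * w l) = 0"
  shows "\<forall>p<n. (\<Sum>l<m. cnj (w l) * A $$ (l,p)) = 0"
proof -
  define K where "K = mat_adjoint A"
  have K: "K \<in> carrier_mat n m" unfolding K_def using A by simp
  define v where "v = vec m w"
  have v: "v \<in> carrier_vec m" unfolding v_def by simp
  have "(\<Sum>a<m. cnj (v$a) * ((mat_adjoint K * K) *\<^sub>v v)$a) = 0"
  proof (intro sum.neutral ballI)
    fix a assume a: "a \<in> {..<m}"
    have "((mat_adjoint K * K) *\<^sub>v v)$a = (\<Sum>l<m. (A * mat_adjoint A) $$ (a,l) * w l)"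
      using a A unfolding K_def adj_adj v_def by (simp add: scalar_prod_def lessThan_atLeast0)
    then show "cnj (v$a) * ((mat_adjoint K * K) *\<^sub>v v)$a = 0" using w a by simp
  qed
  then have "(\<Sum>l<n. cnj ((K *\<^sub>v v)$l) * (K *\<^sub>v v)$l) = 0" using quad_form[OF K v] by simp
  then have z: "\<forall>l<n. (K *\<^sub>v v)$l = 0" by (rule sum_cnj_sq_zero)
  show ?thesis
  proof (intro allI impI)
    fix p assume p: "p < n"
    have "(K *\<^sub>v v)$p = (\<Sum>l<m. cnj (A $$ (l,p)) * w l)"
      using p A unfolding K_def v_def by (simp add: scalar_prod_def lessThan_atLeast0)
    then have "(\<Sum>l<m. cnj (A $$ (l,p)) * w l) = 0" using z p by simp
    then have "cnj (\<Sum>l<m. cnj (A $$ (l,p)) * w l) = 0" by simp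
    then show "(\<Sum>l<m. cnj (w l) * A $$ (l,p)) = 0" by (simp add: mult.commute)
  qed
qed

lemma herm_null:
  fixes A :: "complex mat"
  assumes A: "A \<in> carrier_mat m n"
    and hw: "\<forall>k<m. (\<Sum>l<m. (A * mat_adjoint A) $$ (k,l) * w l) = 0"
    and wu: "\<forall>k<m. w k = - (\<Sum>l<m. (A * mat_adjoint A) $$ (k,l) * u l)"
  shows "\<forall>k<m. w k = 0"
proof -
  define H where "H = A * mat_adjoint A"
  have "(\<Sum>k<m. cnj (w k) * w k) = (\<Sum>k<m. - (cnj (w k) * (\<Sum>l<m. H $$ (k,l) * u l)))"
    using wu unfolding H_def by (intro sum.cong refl) simp
  also have "\<dots> = - (\<Sum>k<m. \<Sum>l<m. cnj (w k) * H $$ (k,l) * u l)"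
    by (simp add: sum_negf sum_distrib_left mult.assoc)
  also have "\<dots> = - (\<Sum>l<m. \<Sum>k<m. cnj (w k) * H $$ (k,l) * u l)"
    by (subst sum.swap) simp
  also have "\<dots> = - (\<Sum>l<m. cnj (\<Sum>k<m. H $$ (l,k) * w k) * u l)"
  proof -
    have "(\<Sum>k<m. cnj (w k) * H $$ (k,l) * u l) = cnj (\<Sum>k<m. H $$ (l,k) * w k) * u l" if l: "l < m" for l
    proof -
      have "(\<Sum>k<m. cnj (w k) * H $$ (k,l) * u l) = (\<Sum>k<m. cnj (w k) * H $$ (k,l)) * u l"
        by (simp add: sum_distrib_right)
      also have "(\<Sum>k<m. cnj (w k) * H $$ (k,l)) = cnj (\<Sum>k<m. H $$ (l,k) * w k)"
      proof -
        have "cnj (w k) * H $$ (k,l) = cnj (H $$ (l,k) * w k)" if k: "k \<in> {..<m}" for k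
          using H_herm[OF A l] k unfolding H_def by (simp add: mult.commute)
        then show ?thesis unfolding cnj_sum by (intro sum.cong refl)
      qed
      finally show ?thesis .
    qed
    then show ?thesis by simp
  qed
  also have "\<dots> = 0" using hw unfolding H_def by simp
  finally show ?thesis by (rule sum_cnj_sq_zero)
qed

lemma adj_kernel:
  fixes A :: "complex mat" and a :: "nat \<Rightarrow> nat \<Rightarrow> complex" and P :: "nat \<Rightarrow> complex"
  assumes A: "A \<in> carrier_mat m n"
    and eq0: "\<forall>k<m. (\<Sum>l<m. (A * mat_adjoint A) $$ (k,l) * a 0 l) = (if k = j then P 0 else 0)"
    and eqS: "\<And>t. \<forall>k<m. (\<Sum>l<m. (A * mat_adjoint A) $$ (k,l) * a (Suc t) l) + a t k = (if k = j then P (Suc t) else 0)"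
    and P0: "\<And>t. t < d \<Longrightarrow> P t = 0"
  shows "t < d \<Longrightarrow> \<forall>k<m. (\<Sum>l<m. (A * mat_adjoint A) $$ (k,l) * a t l) = 0"
proof (induction t)
  case 0
  then show ?case using eq0 P0[of 0] by simp
next
  case (Suc t)
  then have IH: "\<forall>k<m. (\<Sum>l<m. (A * mat_adjoint A) $$ (k,l) * a t l) = 0" by simp
  have e: "\<forall>k<m. a t k = - (\<Sum>l<m. (A * mat_adjoint A) $$ (k,l) * a (Suc t) l)"
    using eqS[of t] P0[OF Suc.prems] by (auto simp: eq_neg_iff_add_eq_0 add.commute)
  have "\<forall>k<m. a t k = 0" by (rule herm_null[OF A IH e])
  then show ?case using eqS[of t] P0[OF Suc.prems] by auto
qed


lemma coeff_X_mult: "coeff ([:0,1:] * (p::'a::comm_ring_1 poly)) 0 = 0" "coeff ([:0,1:] * p) (Suc t) = coeff p t"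
  by (simp_all add: mult_pCons_left)

lemma main_identity:
  fixes A B X :: "complex mat"
  assumes A: "A \<in> carrier_mat m n" and B: "B \<in> carrier_mat s n" and X: "is_min_norm_ls_solution A B X"
    and i: "i < s" and j: "j < m" and e: "e \<le> m - vec_space.rank m A"
  defines "H \<equiv> A * mat_adjoint A" and "bc \<equiv> row (B * mat_adjoint A) i"
  defines "Mt \<equiv> map_mat (\<lambda>a. [:a:]) H + diagp m (\<lambda>l. if l \<in> {} then 0 else [:0,1:])"
  defines "Nt \<equiv> map_mat (\<lambda>a. [:a:]) (replace_row H j bc) + diagp m (\<lambda>l. if l \<in> {j} then 0 else [:0,1:])"
  shows "coeff (det Nt) e = X $$ (i,j) * coeff (det Mt) e"
proof -
  define r where "r = vec_space.rank m A"
  have H: "H \<in> carrier_mat m m" unfolding H_def using A by simp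
  have Xc: "X \<in> carrier_mat s m" using X A B unfolding is_min_norm_ls_solution_def is_ls_solution_def by auto
  have XL: "is_ls_solution A B X" using X unfolding is_min_norm_ls_solution_def by auto
  have BA: "B * mat_adjoint A \<in> carrier_mat s m" using A B by simp
  have bcd: "dim_vec bc = m" unfolding bc_def using BA A by simp
  have bck: "bc $ l = (\<Sum>k<m. X $$ (i,k) * H $$ (k,l))" if l: "l < m" for l
  proof -
    have "bc $ l = (\<Sum>p<n. B $$ (i,p) * cnj (A $$ (l,p)))"
      unfolding bc_def using BA i l A B by (simp add: mult_entry[OF B adj_carrier[OF A] i l])
    also have "\<dots> = (\<Sum>k<m. X $$ (i,k) * (\<Sum>p<n. A $$ (k,p) * cnj (A $$ (l,p))))"
      using ls_normal[OF A B XL i l] by simp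
    also have "\<dots> = (\<Sum>k<m. X $$ (i,k) * H $$ (k,l))"
    proof (intro sum.cong refl)
      fix k assume "k \<in> {..<m}" hence k: "k < m" by simp
      show "X $$ (i,k) * (\<Sum>p<n. A $$ (k,p) * cnj (A $$ (l,p))) = X $$ (i,k) * H $$ (k,l)"
        unfolding H_def H_entry[OF A k l] ..
    qed
    finally show ?thesis .
  qed
  have Mt: "Mt \<in> carrier_mat m m" unfolding Mt_def diagp_def using H by simp
  have Nt: "Nt \<in> carrier_mat m m" unfolding Nt_def diagp_def using H by (simp add: replace_row_def)
  have Mtk: "Mt $$ (k,l) = [:H $$ (k,l):] + (if k = l then [:0,1:] else 0)" if "k < m" "l < m" for k l
    unfolding Mt_def diagp_def using that H by simp
  have Ntk: "Nt $$ (k,l) = (if k = j then [:bc $ l:] else Mt $$ (k,l))" if "k < m" "l < m" for k l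
    unfolding Nt_def diagp_def using that H Mtk[OF that] by (simp add: replace_row_def)
  define adjM where "adjM = adj_mat Mt"
  have adjM: "adjM \<in> carrier_mat m m" unfolding adjM_def using adj_mat(1)[OF Mt] .
  have MA: "Mt * adjM = det Mt \<cdot>\<^sub>m 1\<^sub>m m" unfolding adjM_def using adj_mat(2)[OF Mt] .
  define a where "a = (\<lambda>t l. coeff (adjM $$ (l,j)) t)"
  define P where "P = (\<lambda>t. coeff (det Mt) t)"
  have rowk: "(\<Sum>l<m. [:H $$ (k,l):] * adjM $$ (l,j)) + [:0,1:] * adjM $$ (k,j) = (if k = j then det Mt else 0)"
    if k: "k < m" for k
  proof -
    have "(Mt * adjM) $$ (k,j) = (\<Sum>l<m. Mt $$ (k,l) * adjM $$ (l,j))" by (rule mult_entry[OF Mt adjM k j])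
    also have "\<dots> = (\<Sum>l<m. [:H $$ (k,l):] * adjM $$ (l,j) + (if k = l then [:0,1:] * adjM $$ (l,j) else 0))"
      by (intro sum.cong refl) (simp add: Mtk[OF k] algebra_simps)
    also have "\<dots> = (\<Sum>l<m. [:H $$ (k,l):] * adjM $$ (l,j)) + [:0,1:] * adjM $$ (k,j)"
      using k by (simp add: sum.distrib)
    finally show ?thesis using MA k j by (cases "k = j") auto
  qed
  have eq0: "\<forall>k<m. (\<Sum>l<m. H $$ (k,l) * a 0 l) = (if k = j then P 0 else 0)"
  proof (intro allI impI)
    fix k assume k: "k < m"
    have "coeff ((\<Sum>l<m. [:H $$ (k,l):] * adjM $$ (l,j)) + [:0,1:] * adjM $$ (k,j)) 0 = coeff (if k = j then det Mt else 0) 0"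
      using rowk[OF k] by simp
    then show "(\<Sum>l<m. H $$ (k,l) * a 0 l) = (if k = j then P 0 else 0)"
      unfolding a_def P_def by (simp add: coeff_sum coeff_X_mult split: if_splits)
  qed
  have eqS: "\<forall>k<m. (\<Sum>l<m. H $$ (k,l) * a (Suc t) l) + a t k = (if k = j then P (Suc t) else 0)" for t
  proof (intro allI impI)
    fix k assume k: "k < m"
    have "coeff ((\<Sum>l<m. [:H $$ (k,l):] * adjM $$ (l,j)) + [:0,1:] * adjM $$ (k,j)) (Suc t) = coeff (if k = j then det Mt else 0) (Suc t)"
      using rowk[OF k] by simp
    then show "(\<Sum>l<m. H $$ (k,l) * a (Suc t) l) + a t k = (if k = j then P (Suc t) else 0)"
      unfolding a_def P_def by (simp add: coeff_sum coeff_X_mult split: if_splits)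
  qed
  have P0: "P t = 0" if t: "t < m - r" for t
  proof -
    have "P t = (\<Sum>S \<in> {S. S \<subseteq> {..<m} \<and> {} \<subseteq> S \<and> m - card S = t}. det (submatrix H S S))"
      unfolding P_def Mt_def by (rule det_char_coeff[OF H]) simp
    also have "{S. S \<subseteq> {..<m} \<and> {} \<subseteq> S \<and> m - card S = t} = index_sets (m - t) m"
    proof -
      have cl: "card S \<le> m" if "S \<subseteq> {..<m}" for S using card_mono[OF _ that] by simp
      have tm: "t \<le> m" using t by simp
      show ?thesis unfolding index_sets_def
      proof (intro Collect_cong)
        fix S show "(S \<subseteq> {..<m} \<and> {} \<subseteq> S \<and> m - card S = t) = (S \<subseteq> {..<m} \<and> card S = m - t)"
          using cl[of S] tm by auto
      qed
    qed
    also have "(\<Sum>S \<in> index_sets (m - t) m. det (submatrix H S S)) = 0"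
      using eH_zero[OF A, of "m - t"] t unfolding H_def principal_submatrix_def r_def by simp
    finally show ?thesis .
  qed
  have kern: "\<forall>k<m. (\<Sum>l<m. H $$ (k,l) * a t l) = 0" if "t < m - r" for t
    using adj_kernel[OF A eq0[unfolded H_def] eqS[unfolded H_def] P0 that] unfolding H_def by simp
  have orth: "(\<Sum>l<m. X $$ (i,l) * a t l) = 0" if t: "t < m - r" for t
  proof -
    have "\<forall>p<n. (\<Sum>l<m. cnj (a t l) * A $$ (l,p)) = 0" using null_A[OF A kern[OF t, unfolded H_def]] .
    then have "(\<Sum>l<m. X $$ (i,l) * cnj (cnj (a t l))) = 0" by (intro ls_orth[OF A B X i]) auto
    then show ?thesis by simp
  qed
  have cof: "cofactor Nt j l = adjM $$ (l,j)" if l: "l < m" for l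
  proof -
    have "mat_delete Nt j l = mat_delete Mt j l"
      using Nt Mt j l by (intro eq_matI) (auto simp: mat_delete_def Ntk)
    then show ?thesis unfolding adjM_def adj_mat_def cofactor_def using Mt l j by simp
  qed
  have "det Nt = (\<Sum>l<m. Nt $$ (j,l) * cofactor Nt j l)" by (rule laplace_expansion_row[OF Nt j])
  also have "\<dots> = (\<Sum>l<m. [:bc $ l:] * adjM $$ (l,j))"
    by (intro sum.cong refl) (simp add: Ntk j cof)
  finally have dN: "coeff (det Nt) e = (\<Sum>l<m. bc $ l * a e l)"
    unfolding a_def by (simp add: coeff_sum)
  also have "\<dots> = (\<Sum>l<m. \<Sum>k<m. X $$ (i,k) * H $$ (k,l) * a e l)"
    by (intro sum.cong refl) (simp add: bck sum_distrib_right)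
  also have "\<dots> = (\<Sum>k<m. X $$ (i,k) * (\<Sum>l<m. H $$ (k,l) * a e l))"
    by (subst sum.swap) (simp add: sum_distrib_left mult.assoc)
  also have "\<dots> = X $$ (i,j) * P e"
  proof (cases e)
    case 0
    have "(\<Sum>k<m. X $$ (i,k) * (\<Sum>l<m. H $$ (k,l) * a e l)) = (\<Sum>k<m. X $$ (i,k) * (if k = j then P 0 else 0))"
      using eq0 0 by (intro sum.cong refl) simp
    also have "\<dots> = X $$ (i,j) * P 0" using j by (simp add: if_distrib[of "\<lambda>x. _ * x"] cong: if_cong)
    finally show ?thesis using 0 by simp
  next
    case (Suc t)
    have t: "t < m - r" using e Suc unfolding r_def by simp
    have "(\<Sum>k<m. X $$ (i,k) * (\<Sum>l<m. H $$ (k,l) * a e l)) = (\<Sum>k<m. X $$ (i,k) * (if k = j then P (Suc t) else 0) - X $$ (i,k) * a t k)"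
    proof (intro sum.cong refl)
      fix k assume k: "k \<in> {..<m}"
      have hs: "(\<Sum>l<m. H $$ (k,l) * a e l) = (if k = j then P (Suc t) else 0) - a t k"
        using eqS[of t] k Suc by (simp add: eq_diff_eq)
      show "X $$ (i,k) * (\<Sum>l<m. H $$ (k,l) * a e l) = X $$ (i,k) * (if k = j then P (Suc t) else 0) - X $$ (i,k) * a t k"
        unfolding hs by (rule right_diff_distrib)
    qed
    also have "\<dots> = X $$ (i,j) * P (Suc t) - (\<Sum>k<m. X $$ (i,k) * a t k)"
      using j by (simp add: sum_subtractf if_distrib[of "\<lambda>x. _ * x"] cong: if_cong)
    also have "\<dots> = X $$ (i,j) * P (Suc t)" using orth[OF t] by simp
    finally show ?thesis using Suc by simp
  qed
  finally show ?thesis unfolding P_def .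
qed



lemma sets_conv:
  assumes "e \<le> m"
  shows "{S. S \<subseteq> {..<m} \<and> J \<subseteq> S \<and> m - card S = e} = {S \<in> index_sets (m - e) m. J \<subseteq> S}"
proof -
  have cl: "card S \<le> m" if "S \<subseteq> {..<m}" for S using card_mono[OF _ that] by simp
  show ?thesis unfolding index_sets_def
  proof (intro Collect_cong)
    fix S show "(S \<subseteq> {..<m} \<and> J \<subseteq> S \<and> m - card S = e) = (S \<in> {\<alpha>. \<alpha> \<subseteq> {..<m} \<and> card \<alpha> = m - e} \<and> J \<subseteq> S)"
      using cl[of S] assms by auto
  qed
qed

lemma eval0_det:
  fixes M :: "complex mat"
  assumes M: "M \<in> carrier_mat m m"
  shows "coeff (det (map_mat (\<lambda>a. [:a:]) M + diagp m (\<lambda>l. if l \<in> J then 0 else [:0,1:]))) 0 = det M"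
proof -
  have "coeff (det (map_mat (\<lambda>a. [:a:]) M + diagp m (\<lambda>l. if l \<in> J then 0 else [:0,1:]))) 0
     = poly (det (map_mat (\<lambda>a. [:a:]) M + diagp m (\<lambda>l. if l \<in> J then 0 else [:0,1:]))) 0"
    by (simp add: poly_0_coeff_0)
  also have "\<dots> = det (map_mat (\<lambda>p. poly p 0) (map_mat (\<lambda>a. [:a:]) M + diagp m (\<lambda>l. if l \<in> J then 0 else [:0,1:])))"
    by (metis comm_ring_hom.hom_det[OF ev0_hom])
  also have "map_mat (\<lambda>p. poly p 0) (map_mat (\<lambda>a. [:a:]) M + diagp m (\<lambda>l. if l \<in> J then 0 else [:0,1:])) = M"
    using M unfolding diagp_def by (intro eq_matI) auto
  finally show ?thesis .
qed

theorem theorem4p2: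
  fixes A B X :: "complex mat" and m n s r :: nat
  assumes A: "A \<in> carrier_mat m n"
    and B: "B \<in> carrier_mat s n"
    and X: "is_min_norm_ls_solution A B X"
  shows "(vec_space.rank m A = r \<and> r \<le> n \<and> n < m \<longrightarrow>
           (\<forall>i<s. \<forall>j<m. X $$ (i,j) =
              (\<Sum>\<alpha>\<in>{\<alpha>\<in>index_sets r m. j \<in> \<alpha>}.
                 det (principal_submatrix
                       (replace_row (A * mat_adjoint A) j (row (B * mat_adjoint A) i)) \<alpha>))
              / (\<Sum>\<alpha>\<in>index_sets r m. det (principal_submatrix (A * mat_adjoint A) \<alpha>))))
       \<and> (vec_space.rank m A = m \<longrightarrow>
           (\<forall>i<s. \<forall>j<m. X $$ (i,j) =
              det (replace_row (A * mat_adjoint A) j (row (B * mat_adjoint A) i))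
              / det (A * mat_adjoint A)))"
proof -
  define H where "H = A * mat_adjoint A"
  have H: "H \<in> carrier_mat m m" unfolding H_def using A by simp
  have RH: "replace_row H j (row (B * mat_adjoint A) i) \<in> carrier_mat m m" for i j
    using H unfolding replace_row_def by auto
  define Mt where "Mt = map_mat (\<lambda>a. [:a:]) H + diagp m (\<lambda>l. if l \<in> {} then 0 else [:0,1:])"
  define Nt where "Nt = (\<lambda>i j. map_mat (\<lambda>a. [:a:]) (replace_row H j (row (B * mat_adjoint A) i)) + diagp m (\<lambda>l. if l \<in> {j} then 0 else [:0,1:]))"
  have main: "coeff (det (Nt i j)) e = X $$ (i,j) * coeff (det Mt) e"
    if "i < s" "j < m" "e \<le> m - vec_space.rank m A" for i j e
    using main_identity[OF A B X that] unfolding Mt_def Nt_def H_def by simp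
  show ?thesis
  proof (intro conjI impI allI)
    fix i j assume r: "vec_space.rank m A = r \<and> r \<le> n \<and> n < m" and i: "i < s" and j: "j < m"
    have rm: "r \<le> m" using r by simp
    have e: "m - r \<le> m - vec_space.rank m A" using r by simp
    have num: "coeff (det (Nt i j)) (m - r) = (\<Sum>\<alpha>\<in>{\<alpha>\<in>index_sets r m. j \<in> \<alpha>}.
                 det (principal_submatrix (replace_row H j (row (B * mat_adjoint A) i)) \<alpha>))"
    proof -
      have "coeff (det (Nt i j)) (m - r) = (\<Sum>S \<in> {S. S \<subseteq> {..<m} \<and> {j} \<subseteq> S \<and> m - card S = m - r}.
          det (submatrix (replace_row H j (row (B * mat_adjoint A) i)) S S))"
        unfolding Nt_def by (rule det_char_coeff[OF RH]) (use j in simp)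
      also have "{S. S \<subseteq> {..<m} \<and> {j} \<subseteq> S \<and> m - card S = m - r} = {\<alpha>\<in>index_sets r m. j \<in> \<alpha>}"
        using sets_conv[of "m - r" m "{j}"] rm by simp
      finally show ?thesis unfolding principal_submatrix_def .
    qed
    have den: "coeff (det Mt) (m - r) = (\<Sum>\<alpha>\<in>index_sets r m. det (principal_submatrix H \<alpha>))"
    proof -
      have "coeff (det Mt) (m - r) = (\<Sum>S \<in> {S. S \<subseteq> {..<m} \<and> {} \<subseteq> S \<and> m - card S = m - r}. det (submatrix H S S))"
        unfolding Mt_def by (rule det_char_coeff[OF H]) simp
      also have "{S. S \<subseteq> {..<m} \<and> {} \<subseteq> S \<and> m - card S = m - r} = index_sets r m"
        using sets_conv[of "m - r" m "{}"] rm by simp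
      finally show ?thesis unfolding principal_submatrix_def .
    qed
    have nz: "(\<Sum>\<alpha>\<in>index_sets r m. det (principal_submatrix H \<alpha>)) \<noteq> 0"
      using eH_nonzero[OF A] r unfolding H_def by simp
    have "(\<Sum>\<alpha>\<in>{\<alpha>\<in>index_sets r m. j \<in> \<alpha>}. det (principal_submatrix (replace_row H j (row (B * mat_adjoint A) i)) \<alpha>))
        = X $$ (i,j) * (\<Sum>\<alpha>\<in>index_sets r m. det (principal_submatrix H \<alpha>))"
      using main[OF i j e] unfolding num den .
    then show "X $$ (i,j) =
              (\<Sum>\<alpha>\<in>{\<alpha>\<in>index_sets r m. j \<in> \<alpha>}.
                 det (principal_submatrix
                       (replace_row (A * mat_adjoint A) j (row (B * mat_adjoint A) i)) \<alpha>))
              / (\<Sum>\<alpha>\<in>index_sets r m. det (principal_submatrix (A * mat_adjoint A) \<alpha>))"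
      using nz unfolding H_def by (simp add: eq_divide_eq)
  next
    fix i j assume r: "vec_space.rank m A = m" and i: "i < s" and j: "j < m"
    have d0: "det H = coeff (det Mt) 0" unfolding Mt_def by (rule eval0_det[OF H, symmetric])
    have n0: "det (replace_row H j (row (B * mat_adjoint A) i)) = coeff (det (Nt i j)) 0"
      unfolding Nt_def by (rule eval0_det[OF RH, symmetric])
    have "coeff (det Mt) 0 = (\<Sum>S \<in> {S. S \<subseteq> {..<m} \<and> {} \<subseteq> S \<and> m - card S = 0}. det (submatrix H S S))"
      unfolding Mt_def by (rule det_char_coeff[OF H]) simp
    also have "{S. S \<subseteq> {..<m} \<and> {} \<subseteq> S \<and> m - card S = 0} = index_sets m m"
      using sets_conv[of 0 m "{}"] by simp
    finally have "det H = (\<Sum>\<alpha>\<in>index_sets (vec_space.rank m A) m. det (principal_submatrix H \<alpha>))"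
      unfolding d0 principal_submatrix_def r .
    then have nz: "det H \<noteq> 0" using eH_nonzero[OF A] unfolding H_def by simp
    have "det (replace_row H j (row (B * mat_adjoint A) i)) = X $$ (i,j) * det H"
      unfolding n0 d0 by (rule main[OF i j]) simp
    then show "X $$ (i,j) = det (replace_row (A * mat_adjoint A) j (row (B * mat_adjoint A) i)) / det (A * mat_adjoint A)"
      using nz unfolding H_def by (simp add: eq_divide_eq)
  qed
qed


end
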